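(* Let $A$ be a torsion-free $\mathbb{Z}_{(p)}$-algebra and $F$ a formal group law over $A$. Then $F$ is $p^n$-typical if and only if its logarithm has the form $\sum_{i\ge0}l_ix^{p^{ni}}$ with $l_i\in A\otimes\mathbb{Q}$.
   Context: A formal group law $F$ over a $\mathbb{Z}_{(p)}$-algebra is $p$-typical in the sense of Cartier (over a torsion-free $\mathbb{Z}_{(p)}$-algebra, this is equivalent to its logarithm having the form $\sum_{i\ge0}l_ix^{p^i}$). A power series in $x$ is $p^n$-gradable if it has the form $\sum_{j\ge0}a_jx^{1+j(p^n-1)}$. $F$ is $p^n$-typical if it is $p$-typical and the series $[p]_F(x)$ ($p$-fold formal sum of $x$) is $p^n$-gradable. *)

theory Defs
  imports "HOL-Computational_Algebra.Formal_Power_Series"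
begin

(* Bivariate power series over a ring are represented as 'a fps fps.
   The coefficient of x^i y^j of F is  fps_nth (fps_nth F i) j  (outer index = x-degree).
   The product in 'a fps fps is exactly the product of bivariate power series. *)

definition c2 :: "'a fps fps \<Rightarrow> nat \<Rightarrow> nat \<Rightarrow> 'a" where
  "c2 F i j = fps_nth (fps_nth F i) j"

definition map_ps2 :: "('a \<Rightarrow> 'b) \<Rightarrow> 'a fps fps \<Rightarrow> 'b fps fps" where
  "map_ps2 \<phi> F = Abs_fps (\<lambda>i. Abs_fps (\<lambda>j. \<phi> (fps_nth (fps_nth F i) j)))"

(* Associativity is written coefficientwise: since F has zero constant term,
   [x^i y^j z^k] F(F(x,y),z) = sum_{a <= i+j} [x^a z^k]F * [x^i y^j] F^a, and
   [x^i y^j z^k] F(x,F(y,z)) = sum_{b <= j+k} [x^i y^b]F * [y^j z^k] F^b. *)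
definition formal_group_law :: "'a::comm_ring_1 fps fps \<Rightarrow> bool" where
  "formal_group_law F \<longleftrightarrow>
     (\<forall>i. c2 F i 0 = (if i = 1 then 1 else 0)) \<and>
     (\<forall>j. c2 F 0 j = (if j = 1 then 1 else 0)) \<and>
     (\<forall>i j. c2 F i j = c2 F j i) \<and>
     (\<forall>i j k. (\<Sum>a\<le>i+j. c2 F a k * c2 (F ^ a) i j)
             = (\<Sum>b\<le>j+k. c2 F i b * c2 (F ^ b) j k))"

(* Formal sum F(g(x), h(x)) of two one-variable series with zero constant term:
   [x^m] F(g,h) = sum_{i,j <= m} [x^i y^j]F * [x^m](g^i h^j). *)
definition fgl_add :: "'a::comm_ring_1 fps fps \<Rightarrow> 'a fps \<Rightarrow> 'a fps \<Rightarrow> 'a fps" where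
  "fgl_add F g h = Abs_fps (\<lambda>m. \<Sum>i\<le>m. \<Sum>j\<le>m. c2 F i j * fps_nth (g ^ i * h ^ j) m)"

fun fgl_mult :: "'a::comm_ring_1 fps fps \<Rightarrow> nat \<Rightarrow> 'a fps" where
  "fgl_mult F 0 = 0"
| "fgl_mult F (Suc m) = fgl_add F (fgl_mult F m) fps_X"

definition Zp_algebra :: "nat \<Rightarrow> 'a::comm_ring_1 itself \<Rightarrow> bool" where
  "Zp_algebra p _ \<longleftrightarrow> (\<forall>m::nat. coprime m p \<longrightarrow> (\<exists>u::'a. of_nat m * u = 1))"

definition torsion_free :: "'a::comm_ring_1 itself \<Rightarrow> bool" where
  "torsion_free _ \<longleftrightarrow> (\<forall>(m::nat) (a::'a). m \<noteq> 0 \<longrightarrow> of_nat m * a = 0 \<longrightarrow> a = 0)"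

(* phi : A -> B exhibits B as A \<otimes> Q: phi is an injective ring homomorphism,
   every nonzero integer is invertible in B, and every element of B is phi(a)/m. *)
definition is_rationalization :: "('a::comm_ring_1 \<Rightarrow> 'b::comm_ring_1) \<Rightarrow> bool" where
  "is_rationalization \<phi> \<longleftrightarrow>
     \<phi> 1 = 1 \<and> (\<forall>a b. \<phi> (a + b) = \<phi> a + \<phi> b) \<and> (\<forall>a b. \<phi> (a * b) = \<phi> a * \<phi> b) \<and>
     inj \<phi> \<and>
     (\<forall>m::nat. m \<noteq> 0 \<longrightarrow> (\<exists>u::'b. of_nat m * u = 1)) \<and>
     (\<forall>b::'b. \<exists>(a::'a) (m::nat). m \<noteq> 0 \<and> of_nat m * b = \<phi> a)"

(* l in (A\<otimes>Q)[[x]] is the logarithm of F: l(x) = x + ..., l(F(x,y)) = l(x) + l(y).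
   Coefficientwise: [x^i y^j] l(F(x,y)) = sum_{k <= i+j} l_k [x^i y^j] F^k. *)
definition fgl_log :: "('a::comm_ring_1 \<Rightarrow> 'b::comm_ring_1) \<Rightarrow> 'a fps fps \<Rightarrow> 'b fps \<Rightarrow> bool" where
  "fgl_log \<phi> F l \<longleftrightarrow> fps_nth l 0 = 0 \<and> fps_nth l 1 = 1 \<and>
     (\<forall>i j. (\<Sum>k\<le>i+j. fps_nth l k * c2 (map_ps2 \<phi> F ^ k) i j)
            = (if j = 0 then fps_nth l i else 0) + (if i = 0 then fps_nth l j else 0))"

(* p-typical (Cartier); over a torsion-free Z_(p)-algebra characterized by the
   logarithm having the form sum_i l_i x^(p^i) (as stated in the paper's context). *)
definition p_typical :: "nat \<Rightarrow> ('a::comm_ring_1 \<Rightarrow> 'b::comm_ring_1) \<Rightarrow> 'a fps fps \<Rightarrow> bool" where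
  "p_typical p \<phi> F \<longleftrightarrow> (\<exists>l. fgl_log \<phi> F l \<and> (\<forall>k. fps_nth l k \<noteq> 0 \<longrightarrow> (\<exists>i. k = p ^ i)))"

definition gradable :: "nat \<Rightarrow> 'a::zero fps \<Rightarrow> bool" where
  "gradable q f \<longleftrightarrow> (\<forall>k. fps_nth f k \<noteq> 0 \<longrightarrow> (\<exists>j. k = 1 + j * (q - 1)))"

definition pn_typical :: "nat \<Rightarrow> nat \<Rightarrow> ('a::comm_ring_1 \<Rightarrow> 'b::comm_ring_1) \<Rightarrow> 'a fps fps \<Rightarrow> bool" where
  "pn_typical p n \<phi> F \<longleftrightarrow> p_typical p \<phi> F \<and> gradable (p ^ n) (fgl_mult F p)"

end

theory Submission
  imports Defs
begin

unbundle fps_syntax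



definition fmap :: "('a::comm_ring_1 \<Rightarrow> 'b::comm_ring_1) \<Rightarrow> 'a fps \<Rightarrow> 'b fps" where
  "fmap \<phi> f = Abs_fps (\<lambda>n. \<phi> (f $ n))"

locale rh =
  fixes \<phi> :: "'a::comm_ring_1 \<Rightarrow> 'b::comm_ring_1"
  assumes one: "\<phi> 1 = 1" and add: "\<phi> (a + b) = \<phi> a + \<phi> b" and mul: "\<phi> (a * b) = \<phi> a * \<phi> b"
begin
lemma zero[simp]: "\<phi> 0 = 0"
  using add[of 0 0] by simp
lemma sum: "\<phi> (sum f A) = (\<Sum>x\<in>A. \<phi> (f x))"
  by (induction A rule: infinite_finite_induct) (auto simp: add)
lemma fmap_nth[simp]: "fmap \<phi> f $ n = \<phi> (f $ n)" by (simp add: fmap_def)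
lemma fmap_mult: "fmap \<phi> (f * g) = fmap \<phi> f * fmap \<phi> g"
  by (simp add: fps_eq_iff fps_mult_nth sum mul)
lemma fmap_one: "fmap \<phi> 1 = 1"
  by (simp add: fps_eq_iff one)
lemma fmap_pow: "fmap \<phi> (f ^ k) = fmap \<phi> f ^ k"
  by (induction k) (simp_all add: fmap_one fmap_mult)
lemma fmap_X: "fmap \<phi> fps_X = fps_X"
  by (simp add: fps_eq_iff one)
lemma fmap_zero: "fmap \<phi> 0 = 0"
  by (simp add: fps_eq_iff)
end

lemma rat_rh: "is_rationalization \<phi> \<Longrightarrow> rh \<phi>"
  unfolding is_rationalization_def rh_def by auto




lemma pow_nth_small: "(g::'a::comm_ring_1 fps) $ 0 = 0 \<Longrightarrow> m < i \<Longrightarrow> (g ^ i) $ m = 0"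
  using startsby_zero_power_prefix by blast

lemma mult_pow_nth_small:
  assumes "(g::'a::comm_ring_1 fps) $ 0 = 0" "m < i"
  shows "(h * g ^ i) $ m = 0"
  unfolding fps_mult_nth using assms by (auto intro!: sum.neutral simp: pow_nth_small)

definition ev :: "'b::comm_ring_1 fps \<Rightarrow> 'b fps fps \<Rightarrow> 'b fps" where
  "ev g P = Abs_fps (\<lambda>m. \<Sum>i\<le>m. (P $ i * g ^ i) $ m)"

lemma ev_nth_le:
  assumes g0: "g $ 0 = 0" and mN: "m \<le> N"
  shows "ev g P $ m = (\<Sum>i\<le>N. P $ i * g ^ i) $ m"
proof -
  have "ev g P $ m = (\<Sum>i\<le>m. (P $ i * g ^ i) $ m)" by (simp add: ev_def)
  also have "\<dots> = (\<Sum>i\<le>N. (P $ i * g ^ i) $ m)"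
    using mN by (intro sum.mono_neutral_left) (auto simp: mult_pow_nth_small[OF g0])
  finally show ?thesis by (simp add: fps_sum_nth)
qed

lemma ev_mult:
  assumes g0: "g $ 0 = 0"
  shows "ev g (P * Q) = ev g P * ev g Q"
proof (rule fps_ext)
  fix m
  define T where "T R = (\<Sum>i\<le>m. R $ i * g ^ i)" for R
  define h where "h a c = (P $ a * g ^ a) * (Q $ c * g ^ c)" for a c
  have "(ev g P * ev g Q) $ m = (\<Sum>s=0..m. ev g P $ s * ev g Q $ (m - s))"
    by (simp add: fps_mult_nth)
  also have "\<dots> = (\<Sum>s=0..m. T P $ s * T Q $ (m - s))"
    by (intro sum.cong refl) (simp add: T_def ev_nth_le[OF g0, of _ m])
  also have "\<dots> = (T P * T Q) $ m" by (simp add: fps_mult_nth)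
  also have "T P * T Q = (\<Sum>(a,c)\<in>{..m}\<times>{..m}. h a c)"
    by (simp add: T_def h_def sum_product sum.cartesian_product)
  also have "(\<Sum>(a,c)\<in>{..m}\<times>{..m}. h a c) $ m = (\<Sum>(a,c)\<in>{..m}\<times>{..m}. h a c $ m)"
    by (simp add: fps_sum_nth case_prod_beta)
  also have "\<dots> = (\<Sum>(a,c)\<in>{(a,c). a + c \<le> m}. h a c $ m)"
  proof (rule sum.mono_neutral_right)
    show "finite ({..m}\<times>{..m})" by simp
    show "{(a,c). a + c \<le> m} \<subseteq> {..m}\<times>{..m}" by auto
    show "\<forall>x\<in>{..m} \<times> {..m} - {(a, c). a + c \<le> m}. (case x of (a, c) \<Rightarrow> h a c $ m) = 0"
    proof
      fix x assume "x \<in> {..m} \<times> {..m} - {(a, c). a + c \<le> m}"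
      then obtain a c where x: "x = (a,c)" "m < a + c" by auto
      have "h a c = (P $ a * Q $ c) * g ^ (a + c)" by (simp add: h_def power_add algebra_simps)
      then show "(case x of (a, c) \<Rightarrow> h a c $ m) = 0" using x mult_pow_nth_small[OF g0] by simp
    qed
  qed
  also have "\<dots> = (\<Sum>i\<le>m. \<Sum>a\<le>i. h a (i - a) $ m)"
    by (rule sum.triangle_reindex_eq)
  also have "\<dots> = (\<Sum>i\<le>m. \<Sum>a\<le>i. h a (i - a)) $ m"
    by (simp add: fps_sum_nth)
  also have "(\<Sum>i\<le>m. \<Sum>a\<le>i. h a (i - a)) = T (P * Q)"
    unfolding T_def
  proof (intro sum.cong refl)
    fix i
    have "(\<Sum>a\<le>i. h a (i - a)) = (\<Sum>a\<le>i. P $ a * Q $ (i - a) * g ^ i)"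
    proof (intro sum.cong refl)
      fix a assume "a \<in> {..i}"
      then have "g ^ a * g ^ (i - a) = g ^ i" by (simp add: power_add[symmetric])
      then show "h a (i - a) = P $ a * Q $ (i - a) * g ^ i"
        unfolding h_def by (metis mult.assoc mult.left_commute)
    qed
    also have "\<dots> = (P * Q) $ i * g ^ i"
      by (simp add: fps_mult_nth atLeast0AtMost sum_distrib_right)
    finally show "(\<Sum>a\<le>i. h a (i - a)) = (P * Q) $ i * g ^ i" .
  qed
  also have "T (P * Q) $ m = ev g (P * Q) $ m" by (simp add: T_def ev_nth_le[OF g0, of m m])
  finally show "ev g (P * Q) $ m = (ev g P * ev g Q) $ m" ..
qed

lemma ev_one: "ev g 1 = 1"
  by (rule fps_ext) (simp add: ev_def fps_one_nth atMost_atLeast0 sum.atLeast_Suc_atMost)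

lemma ev_pow: "g $ 0 = 0 \<Longrightarrow> ev g (P ^ k) = ev g P ^ k"
  by (induction k) (simp_all add: ev_one ev_mult)

lemma ev_nth2: "ev g P $ m = (\<Sum>i\<le>m. \<Sum>j\<le>m. P $ i $ j * (g ^ i) $ (m - j))"
  by (simp add: ev_def fps_mult_nth atLeast0AtMost)




definition tot :: "nat \<Rightarrow> 'a::comm_ring_1 fps fps \<Rightarrow> bool" where
  "tot r P \<longleftrightarrow> (\<forall>i j. i + j < r \<longrightarrow> P $ i $ j = 0)"

lemma mult2_nth: "(P * Q) $ i $ j = (\<Sum>a=0..i. \<Sum>b=0..j. P $ a $ b * Q $ (i - a) $ (j - b))"
  by (simp add: fps_mult_nth fps_sum_nth)

lemma tot_mult:
  assumes "tot r P" "tot s Q" shows "tot (r + s) (P * Q)"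
  unfolding tot_def
proof (intro allI impI)
  fix i j assume ij: "i + j < r + s"
  show "(P * Q) $ i $ j = 0" unfolding mult2_nth
  proof (intro sum.neutral ballI)
    fix a b assume "a \<in> {0..i}" "b \<in> {0..j}"
    then show "P $ a $ b * Q $ (i - a) $ (j - b) = 0"
      using assms ij unfolding tot_def
    proof (cases "a + b < r")
      case True then show ?thesis using assms(1) unfolding tot_def by simp
    next
      case False
      then have "(i - a) + (j - b) < s" using ij \<open>a \<in> {0..i}\<close> \<open>b \<in> {0..j}\<close> by auto
      then show ?thesis using assms(2) unfolding tot_def by simp
    qed
  qed
qed

lemma tot_one: "tot 0 P" by (simp add: tot_def)

lemma tot_pow: "tot 1 P \<Longrightarrow> tot k (P ^ k)"
proof (induction k)
  case 0 then show ?case by (simp add: tot_one)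
next
  case (Suc k)
  then have "tot (1 + k) (P * P ^ k)" using tot_mult by blast
  then show ?case by simp
qed

lemma log_comp:
  fixes G :: "'b::comm_ring_1 fps fps" and l g :: "'b fps"
  assumes G00: "G $ 0 $ 0 = 0" and l0: "l $ 0 = 0" and g0: "g $ 0 = 0"
    and id: "\<And>i j. (\<Sum>k\<le>i+j. l $ k * (G ^ k) $ i $ j)
            = (if j = 0 then l $ i else 0) + (if i = 0 then l $ j else 0)"
  shows "l oo ev g G = (l oo g) + l"
proof (rule fps_ext)
  fix m
  have totk: "(G ^ k) $ i $ j = 0" if "i + j < k" for i j k
    using tot_pow[of G k] G00 that by (auto simp: tot_def)
  define R where "R i j = (if j = 0 then l $ i else 0) + (if i = 0 then l $ j else 0)" for i j
  have pw: "(g ^ i) $ (m - j) * (\<Sum>k\<le>m. l $ k * (G ^ k) $ i $ j) = (g ^ i) $ (m - j) * R i j"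
    if "j \<le> m" for i j
  proof (cases "i + j \<le> m")
    case True
    have "(\<Sum>k\<le>m. l $ k * (G ^ k) $ i $ j) = (\<Sum>k\<le>i+j. l $ k * (G ^ k) $ i $ j)"
      using True by (intro sum.mono_neutral_right) (auto simp: totk)
    then show ?thesis using id R_def by simp
  next
    case False
    then have "(g ^ i) $ (m - j) = 0" using that pow_nth_small[OF g0] by simp
    then show ?thesis by simp
  qed
  have "(l oo ev g G) $ m = (\<Sum>k\<le>m. l $ k * (ev g G ^ k) $ m)"
    by (simp add: fps_compose_nth atLeast0AtMost)
  also have "\<dots> = (\<Sum>k\<le>m. l $ k * (\<Sum>i\<le>m. \<Sum>j\<le>m. (G ^ k) $ i $ j * (g ^ i) $ (m - j)))"
    by (simp add: ev_pow[OF g0, symmetric] ev_nth2)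
  also have "\<dots> = (\<Sum>i\<le>m. \<Sum>j\<le>m. (g ^ i) $ (m - j) * (\<Sum>k\<le>m. l $ k * (G ^ k) $ i $ j))"
  proof -
    have "\<And>k. l $ k * (\<Sum>i\<le>m. \<Sum>j\<le>m. (G ^ k) $ i $ j * (g ^ i) $ (m - j))
        = (\<Sum>i\<le>m. \<Sum>j\<le>m. (g ^ i) $ (m - j) * (l $ k * (G ^ k) $ i $ j))"
      by (simp add: sum_distrib_left algebra_simps)
    then have "(\<Sum>k\<le>m. l $ k * (\<Sum>i\<le>m. \<Sum>j\<le>m. (G ^ k) $ i $ j * (g ^ i) $ (m - j)))
       = (\<Sum>k\<le>m. \<Sum>i\<le>m. \<Sum>j\<le>m. (g ^ i) $ (m - j) * (l $ k * (G ^ k) $ i $ j))"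
      by simp
    also have "\<dots> = (\<Sum>i\<le>m. \<Sum>k\<le>m. \<Sum>j\<le>m. (g ^ i) $ (m - j) * (l $ k * (G ^ k) $ i $ j))"
      by (rule sum.swap)
    also have "\<dots> = (\<Sum>i\<le>m. \<Sum>j\<le>m. \<Sum>k\<le>m. (g ^ i) $ (m - j) * (l $ k * (G ^ k) $ i $ j))"
      by (intro sum.cong refl sum.swap)
    also have "\<dots> = (\<Sum>i\<le>m. \<Sum>j\<le>m. (g ^ i) $ (m - j) * (\<Sum>k\<le>m. l $ k * (G ^ k) $ i $ j))"
      by (simp add: sum_distrib_left)
    finally show ?thesis .
  qed
  also have "\<dots> = (\<Sum>i\<le>m. \<Sum>j\<le>m. (g ^ i) $ (m - j) * R i j)"
    by (intro sum.cong refl pw) simp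
  also have "\<dots> = (\<Sum>i\<le>m. (g ^ i) $ m * l $ i) + (\<Sum>j\<le>m. (1::'b fps) $ (m - j) * l $ j)"
  proof -
    have e1: "(g ^ i) $ (m - j) * R i j = (if j = 0 then (g ^ i) $ m * l $ i else 0)
       + (if i = 0 then (1::'b fps) $ (m - j) * l $ j else 0)" for i j
      by (simp add: R_def l0 distrib_left)
    have "(\<Sum>i\<le>m. \<Sum>j\<le>m. (g ^ i) $ (m - j) * R i j)
      = (\<Sum>i\<le>m. \<Sum>j\<le>m. (if j = 0 then (g ^ i) $ m * l $ i else 0))
        + (\<Sum>i\<le>m. \<Sum>j\<le>m. (if i = 0 then (1::'b fps) $ (m - j) * l $ j else 0))"
      by (simp only: e1 sum.distrib)
    also have "(\<Sum>i\<le>m. \<Sum>j\<le>m. (if j = 0 then (g ^ i) $ m * l $ i else 0))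
       = (\<Sum>i\<le>m. (g ^ i) $ m * l $ i)"
      by (simp add: sum.delta)
    also have "(\<Sum>i\<le>m. \<Sum>j\<le>m. (if i = 0 then (1::'b fps) $ (m - j) * l $ j else 0))
       = (\<Sum>j\<le>m. (1::'b fps) $ (m - j) * l $ j)"
    proof -
      have h: "\<And>i. (\<Sum>j\<le>m. (if i = 0 then (1::'b fps) $ (m - j) * l $ j else 0))
          = (if i = 0 then (\<Sum>j\<le>m. (1::'b fps) $ (m - j) * l $ j) else 0)" by simp
      show ?thesis by (simp only: h sum.delta finite_atMost) simp
    qed
    finally show ?thesis .
  qed
  also have "(\<Sum>j\<le>m. (1::'b fps) $ (m - j) * l $ j) = l $ m"
  proof -
    have "(\<Sum>j\<le>m. (1::'b fps) $ (m - j) * l $ j) = (\<Sum>j\<le>m. if j = m then l $ j else 0)"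
      by (intro sum.cong refl) auto
    then show ?thesis by (simp add: sum.delta)
  qed
  finally show "(l oo ev g G) $ m = ((l oo g) + l) $ m"
    by (simp add: fps_compose_nth atLeast0AtMost mult.commute)
qed




lemma G_nth[simp]: "map_ps2 \<phi> F $ i $ j = \<phi> (F $ i $ j)"
  by (simp add: map_ps2_def)

lemma fmap_fgl_add:
  assumes "rh \<phi>"
  shows "fmap \<phi> (fgl_add F g fps_X) = ev (fmap \<phi> g) (map_ps2 \<phi> F)"
proof (rule fps_ext)
  interpret rh \<phi> by fact
  fix m
  have "fmap \<phi> (fgl_add F g fps_X) $ m
      = (\<Sum>i\<le>m. \<Sum>j\<le>m. \<phi> (F $ i $ j) * \<phi> ((g ^ i * fps_X ^ j) $ m))"
    by (simp add: fgl_add_def c2_def sum mul)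
  also have "\<dots> = (\<Sum>i\<le>m. \<Sum>j\<le>m. \<phi> (F $ i $ j) * (fmap \<phi> g ^ i) $ (m - j))"
    by (intro sum.cong refl) (simp add: fps_X_power_mult_right_nth fmap_pow[symmetric])
  also have "\<dots> = ev (fmap \<phi> g) (map_ps2 \<phi> F) $ m"
    by (simp add: ev_nth2)
  finally show "fmap \<phi> (fgl_add F g fps_X) $ m = ev (fmap \<phi> g) (map_ps2 \<phi> F) $ m" .
qed

lemma fgl_row0: "formal_group_law F \<Longrightarrow> F $ i $ 0 = (if i = 1 then 1 else 0)"
  unfolding formal_group_law_def c2_def by (elim conjE allE[of _ i])
lemma fgl_col0: "formal_group_law F \<Longrightarrow> F $ 0 $ j = (if j = 1 then 1 else 0)"
  unfolding formal_group_law_def c2_def by (elim conjE allE[of _ j])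

lemma log01: "fgl_log \<phi> F l \<Longrightarrow> l $ 0 = 0 \<and> l $ 1 = 1"
  unfolding fgl_log_def by (elim conjE) (intro conjI)

lemma ev_nth0: "ev g P $ 0 = P $ 0 $ 0"
  by (simp add: ev_nth2)

lemma mult_props:
  assumes "is_rationalization \<phi>" "formal_group_law F" "fgl_log \<phi> F l"
  shows "fmap \<phi> (fgl_mult F k) $ 0 = 0 \<and> l oo fmap \<phi> (fgl_mult F k) = fps_const (of_nat k) * l"
proof (induction k)
  interpret rh \<phi> using assms(1) by (rule rat_rh)
  case 0
  have "l $ 0 = 0" using assms(3) by (simp add: fgl_log_def)
  then show ?case by (simp add: fmap_zero)
next
  interpret rh \<phi> using assms(1) by (rule rat_rh)
  case (Suc k)
  let ?G = "map_ps2 \<phi> F"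
  have G00: "?G $ 0 $ 0 = 0" using fgl_row0[OF assms(2), of 0] by simp
  have l0: "l $ 0 = 0" using assms(3) by (simp add: fgl_log_def)
  have id: "\<And>i j. (\<Sum>k\<le>i+j. l $ k * (?G ^ k) $ i $ j)
            = (if j = 0 then l $ i else 0) + (if i = 0 then l $ j else 0)"
    using assms(3) by (simp add: fgl_log_def c2_def)
  have e: "fmap \<phi> (fgl_mult F (Suc k)) = ev (fmap \<phi> (fgl_mult F k)) ?G"
    by (simp add: fmap_fgl_add[OF rh_axioms])
  have "fmap \<phi> (fgl_mult F (Suc k)) $ 0 = 0" using e G00 by (simp add: ev_nth0)
  moreover have "l oo fmap \<phi> (fgl_mult F (Suc k)) = fps_const (of_nat (Suc k)) * l"
    using e log_comp[OF G00 l0 _ id] Suc.IH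
    by (simp add: algebra_simps fps_const_add[symmetric])
  ultimately show ?case by simp
qed




definition row0 :: "'a::comm_ring_1 fps fps \<Rightarrow> 'a fps" where "row0 P = Abs_fps (\<lambda>i. P $ i $ 0)"
definition row1 :: "'a::comm_ring_1 fps fps \<Rightarrow> 'a fps" where "row1 P = Abs_fps (\<lambda>i. P $ i $ 1)"

lemma row0_mult: "row0 (P * Q) = row0 P * row0 Q"
  by (simp add: row0_def fps_eq_iff fps_mult_nth fps_sum_nth)

lemma row1_mult: "row1 (P * Q) = row0 P * row1 Q + row1 P * row0 Q"
  by (simp add: row0_def row1_def fps_eq_iff fps_mult_nth fps_sum_nth fps_mult_nth_1 sum.distrib)

lemma row1_pow:
  assumes "row0 P = fps_X"
  shows "row1 (P ^ k) = fps_const (of_nat k) * fps_X ^ (k - 1) * row1 P"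
proof (induction k)
  case 0 then show ?case by (simp add: row1_def fps_eq_iff)
next
  case (Suc k)
  have r0: "row0 (P ^ k) = fps_X ^ k" for k
  proof (induction k)
    case 0 show ?case by (simp add: row0_def fps_eq_iff fps_one_nth)
  next
    case (Suc k) then show ?case by (simp add: row0_mult assms)
  qed
  show ?case
  proof (cases k)
    case 0 then show ?thesis by (simp add: row1_mult r0)
  next
    case (Suc k')
    have "row1 (P ^ Suc k) = row1 (P * P ^ k)" by simp
    also have "\<dots> = fps_X * row1 (P ^ k) + row1 P * fps_X ^ k"
      by (simp only: row1_mult r0 assms)
    also have "\<dots> = fps_X * (fps_const (of_nat k) * fps_X ^ k' * row1 P) + row1 P * fps_X ^ k"
      using Suc.IH Suc by simp
    finally have "row1 (P ^ Suc k) = fps_X * (fps_const (of_nat k) * fps_X ^ k' * row1 P) + row1 P * fps_X ^ k" .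
    also have "\<dots> = fps_const (of_nat (Suc k)) * fps_X ^ k * row1 P"
    proof -
      have a: "fps_X * (fps_const (of_nat k) * fps_X ^ k' * row1 P) = fps_const (of_nat k) * fps_X ^ k * row1 P"
        using Suc by (simp only: power_Suc ac_simps)
      have b: "fps_const (of_nat (Suc k)) = fps_const (of_nat k) + (1::'a fps)"
        by (metis fps_const_add fps_const_1_eq_1 of_nat_Suc add.commute)
      show ?thesis unfolding a b by (simp only: distrib_right distrib_left mult_1_left mult_1_right ac_simps)
    qed
    finally show ?thesis by simp
  qed
qed

lemma log_unique:
  assumes "is_rationalization \<phi>" "formal_group_law F" "fgl_log \<phi> F l" "fgl_log \<phi> F l'"
  shows "l = l'"
proof -
  interpret rh \<phi> using assms(1) by (rule rat_rh)
  let ?G = "map_ps2 \<phi> F"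
  have r0: "row0 ?G = fps_X" using fgl_row0[OF assms(2)]
    by (simp add: row0_def fps_eq_iff one)
  have D0: "row1 ?G $ 0 = 1" using fgl_col0[OF assms(2), of 1]
    by (simp add: row1_def one)
  have key: "(?G ^ Suc i) $ i $ 1 = of_nat (Suc i)" for i
  proof -
    have "(?G ^ Suc i) $ i $ 1 = row1 (?G ^ Suc i) $ i" by (simp add: row1_def)
    also have "\<dots> = of_nat (Suc i)"
      by (simp add: row1_pow[OF r0] mult.assoc fps_X_power_mult_nth D0 del: of_nat_Suc power_Suc)
    finally show ?thesis .
  qed
  have inv: "\<exists>u::'b. of_nat m * u = 1" if "m \<noteq> 0" for m
    using assms(1) that by (simp add: is_rationalization_def)
  have "\<forall>m<n. l $ m = l' $ m" for n
  proof (induction n)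
    case 0 then show ?case by simp
  next
    case (Suc n)
    have "l $ n = l' $ n"
    proof (cases "n \<le> 1")
      case True
      then have "n = 0 \<or> n = 1" by auto
      then show ?thesis using log01[OF assms(3)] log01[OF assms(4)] by auto
    next
      case False
      then obtain i where n: "n = Suc i" and i: "i \<noteq> 0" by (cases n) auto
      have e: "(\<Sum>k\<le>i. L $ k * (?G ^ k) $ i $ 1) + L $ n * of_nat n = 0"
        if "fgl_log \<phi> F L" for L
      proof -
        have "(\<Sum>k\<le>i+1. L $ k * (?G ^ k) $ i $ 1) = (if (1::nat) = 0 then L $ i else 0) + (if i = 0 then L $ 1 else 0)"
          using that unfolding fgl_log_def c2_def by (elim conjE allE[of _ i] allE[of _ 1])
        then have "(\<Sum>k\<le>Suc i. L $ k * (?G ^ k) $ i $ 1) = 0" using i by simp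
        then show ?thesis using key[of i] n by (simp only: sum.atMost_Suc)
      qed
      have s: "(\<Sum>k\<le>i. l $ k * (?G ^ k) $ i $ 1) = (\<Sum>k\<le>i. l' $ k * (?G ^ k) $ i $ 1)"
        using Suc.IH n by (intro sum.cong refl) auto
      have x1: "l $ n * of_nat n = - (\<Sum>k\<le>i. l $ k * (?G ^ k) $ i $ 1)"
        using e[OF assms(3)] by (simp add: eq_neg_iff_add_eq_0 add.commute)
      have x2: "l' $ n * of_nat n = - (\<Sum>k\<le>i. l' $ k * (?G ^ k) $ i $ 1)"
        using e[OF assms(4)] by (simp add: eq_neg_iff_add_eq_0 add.commute)
      have x: "l $ n * of_nat n = l' $ n * of_nat n" using x1 x2 s by simp
      obtain u :: 'b where u: "of_nat n * u = 1" using inv[of n] n by auto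
      have "l $ n = l $ n * of_nat n * u" using u by (simp add: mult.assoc)
      also have "\<dots> = l' $ n * of_nat n * u" using x by simp
      also have "\<dots> = l' $ n" using u by (simp add: mult.assoc)
      finally show ?thesis .
    qed
    then show ?case using Suc.IH less_Suc_eq by auto
  qed
  then show ?thesis by (auto simp: fps_eq_iff)
qed




definition cls :: "nat \<Rightarrow> nat \<Rightarrow> 'a::comm_ring_1 fps \<Rightarrow> bool" where
  "cls d c f \<longleftrightarrow> (\<forall>i. f $ i \<noteq> 0 \<longrightarrow> i mod d = c mod d)"

lemma cls_mult:
  assumes "cls d a f" "cls d b g" shows "cls d (a + b) (f * g)"
  unfolding cls_def
proof (intro allI impI)
  fix i assume "(f * g) $ i \<noteq> 0"
  then obtain j where j: "j \<in> {0..i}" "f $ j * g $ (i - j) \<noteq> 0"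
    unfolding fps_mult_nth by (meson sum.neutral)
  then have "f $ j \<noteq> 0" "g $ (i - j) \<noteq> 0" by auto
  then have "j mod d = a mod d" "(i - j) mod d = b mod d" using assms by (auto simp: cls_def)
  then have "(j + (i - j)) mod d = (a + b) mod d" by (metis mod_add_cong)
  then show "i mod d = (a + b) mod d" using j by simp
qed

lemma cls_pow: "cls d 1 f \<Longrightarrow> cls d k (f ^ k)"
proof (induction k)
  case 0 then show ?case by (simp add: cls_def fps_one_nth)
next
  case (Suc k)
  then have "cls d (1 + k) (f * f ^ k)" using cls_mult by blast
  then show ?case by simp
qed

lemma trunc_pow:
  fixes f :: "'a::comm_ring_1 fps"
  assumes f0: "f $ 0 = 0" and k: "2 \<le> k"
  shows "(f ^ k) $ m = (Abs_fps (\<lambda>i. if i < m then f $ i else 0) ^ k) $ m"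
proof -
  define t where "t = Abs_fps (\<lambda>i. if i < m then f $ i else 0)"
  define S where "S = (\<Sum>i<k. t ^ (k - Suc i) * f ^ i)"
  have t0: "t $ 0 = 0" using f0 by (simp add: t_def)
  have S0: "S $ 0 = 0"
    unfolding S_def fps_sum_nth
  proof (intro sum.neutral ballI)
    fix i assume "i \<in> {..<k}"
    then have "0 < k - Suc i \<or> 0 < i" using k by auto
    then show "(t ^ (k - Suc i) * f ^ i) $ 0 = 0"
      using f0 t0 by (auto simp: startsby_zero_power)
  qed
  have eq: "f ^ k - t ^ k = (f - t) * S" unfolding S_def by (rule power_diff_sumr2)
  moreover have "((f - t) * S) $ m = 0"
    unfolding fps_mult_nth
  proof (intro sum.neutral ballI)
    fix i assume "i \<in> {0..m}"
    then show "(f - t) $ i * S $ (m - i) = 0"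
      by (cases "i < m") (auto simp: t_def S0)
  qed
  ultimately have "(f ^ k - t ^ k) $ m = 0" by (simp only: eq)
  then have "(f ^ k) $ m - (t ^ k) $ m = 0" by (simp only: fps_sub_nth)
  then show ?thesis by (simp add: t_def[symmetric])
qed

lemma p_pow_class:
  fixes p n :: nat
  assumes "prime p" "n \<ge> 1"
  shows "(p ^ (n * i)) mod (p ^ n - 1) = 1 mod (p ^ n - 1)"
proof -
  have "p ^ n \<ge> 1" using prime_gt_0_nat[OF assms(1)] by simp
  then have "p ^ n mod (p ^ n - 1) = 1 mod (p ^ n - 1)"
    by (metis add_diff_inverse_nat less_one mod_add_self1 not_less add.commute)
  then have "(p ^ n) ^ i mod (p ^ n - 1) = 1 ^ i mod (p ^ n - 1)"
    by (metis power_mod)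
  then show ?thesis by (simp add: power_mult)
qed

lemma class_p_pow:
  fixes p n i :: nat
  assumes "prime p" "n \<ge> 1" "(p ^ i) mod (p ^ n - 1) = 1 mod (p ^ n - 1)"
  shows "n dvd i"
proof -
  let ?d = "p ^ n - 1"
  have p2: "p \<ge> 2" using assms(1) by (simp add: prime_ge_2_nat)
  have pn: "p ^ n = p * p ^ (n - 1)" using assms(2) by (cases n) auto
  have a1: "p ^ (n - 1) \<ge> 1" using p2 by simp
  have pp: "p ^ n \<ge> p" using pn a1 by simp
  show ?thesis
  proof (cases "?d = 1")
    case True
    then have "p ^ n = 2" by simp
    then have "p = 2" using pp p2 by simp
    with \<open>p ^ n = 2\<close> have "n = 1" using power_inject_exp[of "2::nat" n 1] by simp
    then show ?thesis by simp
  next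
    case False
    define q r where "q = i div n" and "r = i mod n"
    have i: "i = n * q + r" by (simp add: q_def r_def)
    have rn: "r < n" using assms(2) by (simp add: r_def)
    have "p ^ i = p ^ (n * q) * p ^ r" by (simp add: i power_add)
    then have "p ^ i mod ?d = (p ^ (n * q) * p ^ r) mod ?d" by simp
    also have "\<dots> = ((p ^ (n * q)) mod ?d * p ^ r) mod ?d" by (rule mod_mult_left_eq[symmetric])
    also have "\<dots> = (1 mod ?d * p ^ r) mod ?d" by (simp only: p_pow_class[OF assms(1,2)])
    also have "\<dots> = (1 * p ^ r) mod ?d" by (rule mod_mult_left_eq)
    also have "\<dots> = p ^ r mod ?d" by simp
    finally have e: "p ^ r mod ?d = 1 mod ?d" using assms(3) by simp
    have d2: "?d \<ge> 2" using False pp p2 by linarith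
    have "p ^ r \<le> p ^ (n - 1)" using rn p2 by (intro power_increasing) auto
    moreover have "p ^ (n - 1) < ?d"
    proof (cases "p ^ (n - 1) = 1")
      case True
      then have "p ^ n = p" using pn by simp
      then show ?thesis using True d2 by linarith
    next
      case False
      then have a2: "p ^ (n - 1) \<ge> 2" using a1 by linarith
      have "p * p ^ (n - 1) \<ge> 2 * p ^ (n - 1)" using p2 by (rule mult_le_mono1)
      then show ?thesis using pn a2 by linarith
    qed
    ultimately have "p ^ r < ?d" by simp
    then have "p ^ r = 1" using e d2 by simp
    then have "r = 0" using p2 using nat_power_eq_Suc_0_iff[of p r] by simp
    then show ?thesis by (simp add: i)
  qed
qed




lemma sum_split_last: "(\<Sum>k\<le>(m::nat). f k) = (\<Sum>k<m. f k) + (f m :: 'a::comm_monoid_add)"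
proof -
  have "{..m} = insert m {..<m}" by auto
  then show ?thesis by (simp add: add.commute)
qed

theorem corollary3p1p6:
  fixes p n :: nat
    and F :: "'a::comm_ring_1 fps fps"
    and \<phi> :: "'a \<Rightarrow> 'b::comm_ring_1"
    and l :: "'b fps"
  assumes "prime p" and "n \<ge> 1"
    and "Zp_algebra p TYPE('a)"
    and "torsion_free TYPE('a)"
    and "is_rationalization \<phi>"
    and "formal_group_law F"
    and "fgl_log \<phi> F l"
  shows "pn_typical p n \<phi> F \<longleftrightarrow> (\<forall>k. fps_nth l k \<noteq> 0 \<longrightarrow> (\<exists>i. k = p ^ (n * i)))"
proof -
  interpret rh \<phi> using assms(5) by (rule rat_rh)
  let ?M = "fmap \<phi> (fgl_mult F p)"
  define d where "d = p ^ n - 1"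
  have MM: "?M $ 0 = 0 \<and> l oo ?M = fps_const (of_nat p) * l"
    by (rule mult_props[OF assms(5,6,7)])
  then have M0: "?M $ 0 = 0" and Ml: "l oo ?M = fps_const (of_nat p) * l" by auto
  have l0: "l $ 0 = 0" and l1: "l $ 1 = 1" using log01[OF assms(7)] by auto
  have p2: "p \<ge> 2" using assms(1) by (simp add: prime_ge_2_nat)
  have injphi: "\<phi> a = 0 \<longleftrightarrow> a = 0" for a
    using assms(5) unfolding is_rationalization_def by (metis zero injD)
  have inv: "\<exists>u::'b. of_nat m * u = 1" if "m \<noteq> 0" for m
    using assms(5) that by (simp add: is_rationalization_def)
  have comp_nth: "(\<Sum>k\<le>m. l $ k * (?M ^ k) $ m) = of_nat p * l $ m" for m
  proof -
    have "(l oo ?M) $ m = (\<Sum>k\<le>m. l $ k * (?M ^ k) $ m)"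
      by (simp add: fps_compose_nth atLeast0AtMost)
    then show ?thesis using Ml by simp
  qed
  show ?thesis
  proof
    assume pn: "pn_typical p n \<phi> F"
    then obtain l' where l'1: "fgl_log \<phi> F l'" and l'2: "\<forall>k. l' $ k \<noteq> 0 \<longrightarrow> (\<exists>i. k = p ^ i)"
      and gr: "gradable (p ^ n) (fgl_mult F p)"
      unfolding pn_typical_def p_typical_def by blast
    have ll: "l' = l" by (rule log_unique[OF assms(5,6) l'1 assms(7)])
    have Mcls: "cls d 1 ?M"
      unfolding cls_def
    proof (intro allI impI)
      fix i assume "?M $ i \<noteq> 0"
      then have "fgl_mult F p $ i \<noteq> 0" using injphi by simp
      then obtain j where "i = 1 + j * (p ^ n - 1)" using gr unfolding gradable_def by blast
      then have "i = 1 + j * d" by (simp add: d_def)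
      then show "i mod d = 1 mod d" by (metis mod_mult_self1)
    qed
    have M1: "?M $ 1 = of_nat p"
      using comp_nth[of 1] l0 l1 by simp
    have cl: "l $ m \<noteq> 0 \<longrightarrow> m mod d = 1 mod d" for m
    proof (induction m rule: less_induct)
      case (less m)
      show ?case
      proof (rule ccontr)
        assume "\<not> (l $ m \<noteq> 0 \<longrightarrow> m mod d = 1 mod d)"
        then have lm: "l $ m \<noteq> 0" and mc: "m mod d \<noteq> 1 mod d" by auto
        have "m \<noteq> 0"
        proof
          assume "m = 0" then show False using lm l0 by simp
        qed
        moreover have "m \<noteq> 1" using mc by auto
        ultimately have m2: "m \<ge> 2" by linarith
        have terms: "(\<Sum>k<m. l $ k * (?M ^ k) $ m) = 0"
        proof (intro sum.neutral ballI)
          fix k assume "k \<in> {..<m}"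
          then have km: "k < m" by simp
          show "l $ k * (?M ^ k) $ m = 0"
          proof (cases "l $ k = 0")
            case False
            then have kc: "k mod d = 1 mod d" using less.IH km by blast
            have "cls d k (?M ^ k)" using cls_pow[OF Mcls] .
            then have "(?M ^ k) $ m = 0" using kc mc unfolding cls_def by metis
            then show ?thesis by simp
          qed simp
        qed
        have "(?M ^ m) $ m = of_nat p ^ m" using startsby_zero_power_nth_same[OF M0] M1 by simp
        then have e: "l $ m * of_nat (p ^ m) = of_nat p * l $ m"
          using comp_nth[of m] terms by (simp add: sum_split_last)
        have ppm: "p < p ^ m" using power_strict_increasing[of 1 m p] m2 p2 by simp
        have "l $ m * of_nat (p ^ m - p) = l $ m * of_nat (p ^ m) - l $ m * of_nat p"
          using ppm by (simp add: of_nat_diff right_diff_distrib)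
        also have "\<dots> = 0" using e by (simp add: mult.commute)
        finally have z: "l $ m * of_nat (p ^ m - p) = 0" .
        obtain u :: 'b where u: "of_nat (p ^ m - p) * u = 1" using inv[of "p ^ m - p"] ppm by auto
        have "l $ m = l $ m * of_nat (p ^ m - p) * u" using u by (simp add: mult.assoc)
        also have "\<dots> = 0" using z by simp
        finally show False using lm by simp
      qed
    qed
    show "\<forall>k. l $ k \<noteq> 0 \<longrightarrow> (\<exists>i. k = p ^ (n * i))"
    proof (intro allI impI)
      fix k assume lk: "l $ k \<noteq> 0"
      then obtain i where ki: "k = p ^ i" using l'2 ll by blast
      have "p ^ i mod (p ^ n - 1) = 1 mod (p ^ n - 1)" using cl[of k] lk ki d_def by simp
      then have "n dvd i" by (rule class_p_pow[OF assms(1,2)])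
      then obtain c where "i = n * c" by blast
      then show "\<exists>i. k = p ^ (n * i)" using ki by blast
    qed
  next
    assume R: "\<forall>k. l $ k \<noteq> 0 \<longrightarrow> (\<exists>i. k = p ^ (n * i))"
    have ptyp: "p_typical p \<phi> F"
      unfolding p_typical_def using assms(7) R by blast
    have lcls: "l $ k \<noteq> 0 \<Longrightarrow> k mod d = 1 mod d" for k
      using R p_pow_class[OF assms(1,2)] d_def by blast
    have Mc: "?M $ m \<noteq> 0 \<longrightarrow> m mod d = 1 mod d" for m
    proof (induction m rule: less_induct)
      case (less m)
      show ?case
      proof (rule ccontr)
        assume "\<not> (?M $ m \<noteq> 0 \<longrightarrow> m mod d = 1 mod d)"
        then have Mm: "?M $ m \<noteq> 0" and mc: "m mod d \<noteq> 1 mod d" by auto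
        have m0: "m \<noteq> 0"
        proof
          assume "m = 0" then show False using Mm M0 by simp
        qed
        have m1: "m \<noteq> 1" using mc by auto
        define t where "t = Abs_fps (\<lambda>i. if i < m then ?M $ i else 0)"
        have tcls: "cls d 1 t"
          unfolding cls_def t_def using less.IH by (auto split: if_splits)
        have terms: "l $ k * (?M ^ k) $ m = (if k = 1 then ?M $ m else 0)" for k
        proof (cases "k \<le> 1")
          case True
          then have "k = 0 \<or> k = 1" by auto
          then show ?thesis using l0 l1 by auto
        next
          case False
          show ?thesis
          proof (cases "l $ k = 0")
            case nz: False
            have kc: "k mod d = 1 mod d" using lcls nz .
            have "(?M ^ k) $ m = (t ^ k) $ m" unfolding t_def
              by (rule trunc_pow[OF M0]) (use False in simp)
            moreover have "cls d k (t ^ k)" using cls_pow[OF tcls] .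
            ultimately have "(?M ^ k) $ m = 0" using kc mc unfolding cls_def by metis
            then show ?thesis using False by simp
          qed (use False in simp)
        qed
        have "(\<Sum>k\<le>m. l $ k * (?M ^ k) $ m) = ?M $ m"
          using m0 by (simp only: terms sum.delta' finite_atMost) simp
        moreover have "l $ m = 0" using lcls mc by blast
        ultimately show False using comp_nth[of m] Mm by simp
      qed
    qed
    have gr: "gradable (p ^ n) (fgl_mult F p)"
      unfolding gradable_def
    proof (intro allI impI)
      fix k assume "fgl_mult F p $ k \<noteq> 0"
      then have Mk: "?M $ k \<noteq> 0" using injphi by simp
      then have k0: "k \<ge> 1" using M0 by (cases k) auto
      have "k mod d = 1 mod d" using Mc Mk by blast
      then have "d dvd k - 1" using mod_eq_dvd_iff_nat[OF k0, of d] by blast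
      then obtain j where "k - 1 = d * j" by blast
      then have "k = 1 + j * d" using k0 by (simp add: mult.commute)
      then have "k = 1 + j * (p ^ n - 1)" by (simp only: d_def)
      then show "\<exists>j. k = 1 + j * (p ^ n - 1)" by blast
    qed
    show "pn_typical p n \<phi> F" unfolding pn_typical_def using ptyp gr by blast
  qed
qed



end
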